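(* Let $R$ be a profile of strict linear orders over bundles. An assignment $P$ admits no generalized cycle (w.r.t. $R$) if and only if $P$ is the output, on $R$, of some eating algorithm, i.e., there exist eating speed functions $\omega=(\omega_j)_{j\le n}$ such that the eating algorithm with speeds $\omega$ outputs $P$.
   Context: Setting: $N=\{1,\dots,n\}$ agents; $M=D_1\cup\dots\cup D_p$ items with pairwise disjoint types, $|D_i|=n$, unit supply; bundles $\mathcal D=D_1\times\dots\times D_p$; strict linear orders $\succ_j$ on $\mathcal D$. An assignment is an $n\times|\mathcal D|$ matrix $(p_{j,x})$ with entries in $[0,1]$, rows summing to $1$, and $\sum_j\sum_{x\ni o}p_{j,x}=1$ for every item $o$. $(x,\hat x)$ is an improvable tuple for $P$ if some agent $j$ has $x\succ_j\hat x$ and $p_{j,\hat x}>0$. A nonempty set $C$ of improvable tuples is a generalized cycle if for every item $o$: if some $(x_1,\hat x_1)\in C$ has $o\in x_1$, then some $(x_2,\hat x_2)\in C$ has $o\in\hat x_2$. Eating algorithms: an eating speed function for agent $j$ is a nonnegative integrable function $\omega_j:[0,1]\to\mathbb R_{\ge0}$ with $\int_0^1\omega_j(t)\,dt=1$. Given $\omega=(\omega_j)_j$, items start with supply $1$; a bundle is available if all its items have positive remaining supply. For $t\in[0,1]$, each agent $j$ eats her $\succ_j$-most-preferred available bundle at instantaneous rate $\omega_j(t)$: $p_{j,x}$ for that bundle $x$ grows at rate $\omega_j(t)$ and each item of $x$ is consumed at that rate. When an item's supply reaches $0$ it is exhausted, all bundles containing it become unavailable, and agents switch to their next most preferred available bundle.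 The process stops at time $1$ or when all items are exhausted; the accumulated matrix $(p_{j,x})$ is the output. *)

theory Defs
  imports "HOL-Analysis.Analysis"
begin

text \<open>Agents are 0..n-1. Item types are 0..p-1; the items of type i are the pairs (i,k), k < n,
  so the types are pairwise disjoint and each has n items. A bundle picks one item of each type
  and is represented extensionally as a function x with x i < n for i < p.\<close>

type_synonym bundl = "nat \<Rightarrow> nat"
type_synonym item = "nat \<times> nat"

definition Items :: "nat \<Rightarrow> nat \<Rightarrow> item set" where
  "Items n p = {..<p} \<times> {..<n}"

definition Bundles :: "nat \<Rightarrow> nat \<Rightarrow> bundl set" where
  "Bundles n p = PiE {..<p} (\<lambda>_. {..<n})"

definition item_in :: "nat \<Rightarrow> item \<Rightarrow> bundl \<Rightarrow> bool" where
  "item_in p it x \<longleftrightarrow> fst it < p \<and> x (fst it) = snd it"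

text \<open>A preference profile: R j is agent j's strict order, (x,y) \<in> R j meaning x \<succ>_j y.\<close>
definition is_profile :: "nat \<Rightarrow> nat \<Rightarrow> (nat \<Rightarrow> bundl rel) \<Rightarrow> bool" where
  "is_profile n p R \<longleftrightarrow>
     (\<forall>j<n. R j \<subseteq> Bundles n p \<times> Bundles n p \<and> strict_linear_order_on (Bundles n p) (R j))"

text \<open>Assignments: P j x is the probability that agent j receives bundle x.\<close>
definition is_assignment :: "nat \<Rightarrow> nat \<Rightarrow> (nat \<Rightarrow> bundl \<Rightarrow> real) \<Rightarrow> bool" where
  "is_assignment n p P \<longleftrightarrow>
     (\<forall>j<n. \<forall>x\<in>Bundles n p. 0 \<le> P j x \<and> P j x \<le> 1) \<and>
     (\<forall>j<n. (\<Sum>x\<in>Bundles n p. P j x) = 1) \<and>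
     (\<forall>it\<in>Items n p. (\<Sum>j<n. \<Sum>x\<in>{x\<in>Bundles n p. item_in p it x}. P j x) = 1)"

definition improvable :: "nat \<Rightarrow> nat \<Rightarrow> (nat \<Rightarrow> bundl rel) \<Rightarrow> (nat \<Rightarrow> bundl \<Rightarrow> real)
    \<Rightarrow> bundl \<Rightarrow> bundl \<Rightarrow> bool" where
  "improvable n p R P x xh \<longleftrightarrow>
     x \<in> Bundles n p \<and> xh \<in> Bundles n p \<and> (\<exists>j<n. (x, xh) \<in> R j \<and> P j xh > 0)"

definition generalized_cycle :: "nat \<Rightarrow> nat \<Rightarrow> (nat \<Rightarrow> bundl rel) \<Rightarrow> (nat \<Rightarrow> bundl \<Rightarrow> real)
    \<Rightarrow> (bundl \<times> bundl) set \<Rightarrow> bool" where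
  "generalized_cycle n p R P C \<longleftrightarrow>
     C \<noteq> {} \<and> (\<forall>(x, xh)\<in>C. improvable n p R P x xh) \<and>
     (\<forall>it. (\<exists>(x1, xh1)\<in>C. item_in p it x1) \<longrightarrow> (\<exists>(x2, xh2)\<in>C. item_in p it xh2))"

definition eating_speeds :: "nat \<Rightarrow> (nat \<Rightarrow> real \<Rightarrow> real) \<Rightarrow> bool" where
  "eating_speeds n \<omega> \<longleftrightarrow>
     (\<forall>j<n. (\<forall>t\<in>{0..1}. 0 \<le> \<omega> j t) \<and> \<omega> j integrable_on {0..1} \<and> integral {0..1} (\<omega> j) = 1)"

text \<open>A trajectory: q t j x is the amount of bundle x eaten by agent j up to time t.\<close>
definition rem_supply :: "nat \<Rightarrow> nat \<Rightarrow> (real \<Rightarrow> nat \<Rightarrow> bundl \<Rightarrow> real) \<Rightarrow> real \<Rightarrow> item \<Rightarrow> real" where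
  "rem_supply n p q t it = 1 - (\<Sum>j<n. \<Sum>x\<in>{x\<in>Bundles n p. item_in p it x}. q t j x)"

definition available :: "nat \<Rightarrow> nat \<Rightarrow> (real \<Rightarrow> nat \<Rightarrow> bundl \<Rightarrow> real) \<Rightarrow> real \<Rightarrow> bundl \<Rightarrow> bool" where
  "available n p q t x \<longleftrightarrow> x \<in> Bundles n p \<and> (\<forall>it. item_in p it x \<longrightarrow> rem_supply n p q t it > 0)"

definition eats :: "nat \<Rightarrow> nat \<Rightarrow> (nat \<Rightarrow> bundl rel) \<Rightarrow> (real \<Rightarrow> nat \<Rightarrow> bundl \<Rightarrow> real)
    \<Rightarrow> nat \<Rightarrow> real \<Rightarrow> bundl \<Rightarrow> bool" where
  "eats n p R q j t x \<longleftrightarrow>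
     available n p q t x \<and> (\<forall>y. available n p q t y \<longrightarrow> y = x \<or> (x, y) \<in> R j)"

definition eating_run :: "nat \<Rightarrow> nat \<Rightarrow> (nat \<Rightarrow> bundl rel) \<Rightarrow> (nat \<Rightarrow> real \<Rightarrow> real)
    \<Rightarrow> (real \<Rightarrow> nat \<Rightarrow> bundl \<Rightarrow> real) \<Rightarrow> bool" where
  "eating_run n p R \<omega> q \<longleftrightarrow>
     (\<forall>t\<in>{0..1}. \<forall>j<n. \<forall>x\<in>Bundles n p.
        ((\<lambda>\<tau>. if eats n p R q j \<tau> x then \<omega> j \<tau> else 0) has_integral q t j x) {0..t})"

definition eating_output :: "nat \<Rightarrow> nat \<Rightarrow> (nat \<Rightarrow> bundl rel) \<Rightarrow> (nat \<Rightarrow> real \<Rightarrow> real)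
    \<Rightarrow> (nat \<Rightarrow> bundl \<Rightarrow> real) \<Rightarrow> bool" where
  "eating_output n p R \<omega> P \<longleftrightarrow>
     (\<exists>q. eating_run n p R \<omega> q \<and> (\<forall>j<n. \<forall>x\<in>Bundles n p. P j x = q 1 j x))"

end

theory Submission imports Defs begin

definition clamp01 :: "real \<Rightarrow> real" where "clamp01 u = max 0 (min 1 u)"

definition ind :: "real \<Rightarrow> real \<Rightarrow> real \<Rightarrow> real" where
  "ind M k \<tau> = (if k \<le> M*\<tau> \<and> M*\<tau> < k+1 then M else 0)"

lemma ind_integral:
  fixes M k t :: real
  assumes M: "M > 0" and k: "k \<ge> 0" and t: "t \<ge> 0"
  shows "(ind M k has_integral clamp01 (M*t - k)) {0..t}"
proof -
  define lo where "lo = min t (k/M)"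
  define hi where "hi = min t ((k+1)/M)"
  have lohi: "0 \<le> lo" "lo \<le> hi" "hi \<le> t"
  proof -
    have "k/M \<le> (k+1)/M" using M by (simp add: divide_right_mono)
    then show "0 \<le> lo" "lo \<le> hi" "hi \<le> t" using M k t by (auto simp: lo_def hi_def)
  qed
  have "((\<lambda>x. M) has_integral ((hi - lo) * M)) {lo..hi}"
    using has_integral_const_real[of M lo hi] lohi by simp
  then have "((\<lambda>x. if x \<in> cbox lo hi then M else 0) has_integral ((hi - lo) * M)) (cbox 0 t)"
    using lohi by (intro has_integral_restrict_closed_subinterval) auto
  moreover have "(hi - lo) * M = clamp01 (M*t - k)"
      using M k t unfolding hi_def lo_def clamp01_def
      by (auto simp: min_def max_def field_simps)
  ultimately have I: "((\<lambda>x. if x \<in> {lo..hi} then M else 0) has_integral clamp01 (M*t - k)) {0..t}"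
    by simp
  show ?thesis
  proof (rule has_integral_spike_finite[OF _ _ I, of "{lo, hi}"])
    fix x assume x: "x \<in> {0..t} - {lo, hi}"
    have "(k \<le> M*x \<and> M*x < k+1) \<longleftrightarrow> (k/M \<le> x \<and> x < (k+1)/M)"
      using M by (auto simp: field_simps)
    then show "ind M k x = (if x \<in> {lo..hi} then M else 0)"
      using x M unfolding ind_def lo_def hi_def by (auto simp: min_def split: if_splits)
  qed auto
qed

definition Lm :: "nat \<Rightarrow> (item \<Rightarrow> nat) \<Rightarrow> bundl \<Rightarrow> nat" where
  "Lm p l y = Min ((\<lambda>i. l (i, y i)) ` {..<p})"

lemma Lm_le: "i < p \<Longrightarrow> Lm p l y \<le> l (i, y i)"
  unfolding Lm_def by (rule Min_le) auto

lemma Lm_ex: "p \<ge> 1 \<Longrightarrow> \<exists>i<p. Lm p l y = l (i, y i)"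
proof -
  assume "p \<ge> 1"
  then have "Lm p l y \<in> (\<lambda>i. l (i, y i)) ` {..<p}"
    unfolding Lm_def by (intro Min_in) (auto simp: lessThan_empty_iff)
  then show ?thesis by auto
qed

lemma item_in_iff: "item_in p it y \<longleftrightarrow> (\<exists>i<p. it = (i, y i))"
  unfolding item_in_def by (cases it) auto

lemma levels:
  assumes "finite S" and p: "p \<ge> 1"
    and nocyc: "\<And>C. C \<subseteq> S \<Longrightarrow> C \<noteq> {} \<Longrightarrow>
        \<not> (\<forall>it. (\<exists>(x1, xh1)\<in>C. item_in p it x1) \<longrightarrow> (\<exists>(x2, xh2)\<in>C. item_in p it xh2))"
  shows "\<exists>l. \<forall>(x, xh)\<in>S. Lm p l x < Lm p l xh"
  using assms(1) nocyc
proof (induction S rule: finite_psubset_induct)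
  case (psubset S)
  show ?case
  proof (cases "S = {}")
    case True then show ?thesis by auto
  next
    case False
    have "\<not> (\<forall>it. (\<exists>(x1, xh1)\<in>S. item_in p it x1) \<longrightarrow> (\<exists>(x2, xh2)\<in>S. item_in p it xh2))"
      by (rule psubset.prems[OF subset_refl False])
    then obtain it where
      it1: "\<exists>(x1, xh1)\<in>S. item_in p it x1" and it2: "\<not> (\<exists>(x2, xh2)\<in>S. item_in p it xh2)"
      by blast
    define S' where "S' = {(x, xh)\<in>S. \<not> item_in p it x}"
    have psub: "S' \<subset> S" using it1 unfolding S'_def by auto
    have "S' \<subseteq> S" unfolding S'_def by auto
    have nc:  "\<And>C. C \<subseteq> S' \<Longrightarrow> C \<noteq> {} \<Longrightarrow>
        \<not> (\<forall>it. (\<exists>(x1, xh1)\<in>C. item_in p it x1) \<longrightarrow> (\<exists>(x2, xh2)\<in>C. item_in p it xh2))"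
      using psubset.prems \<open>S' \<subseteq> S\<close> by (meson subset_trans)
    have "\<exists>l. \<forall>(x, xh)\<in>S'. Lm p l x < Lm p l xh"
      by (rule psubset.IH[OF psub nc])
    then obtain l' where l': "\<forall>(x, xh)\<in>S'. Lm p l' x < Lm p l' xh"
      by blast
    define l where "l = (\<lambda>i'. if i' = it then 0 else Suc (l' i'))"
    have "Lm p l x < Lm p l xh" if xS: "(x, xh) \<in> S" for x xh
    proof -
      obtain i0 where i0: "i0 < p" "Lm p l xh = l (i0, xh i0)" using Lm_ex[OF p] by blast
      have "(i0, xh i0) \<noteq> it" proof
        assume "(i0, xh i0) = it"
        then have "item_in p it xh" using i0(1) by (auto simp: item_in_iff)
        then show False using it2 xS by blast
      qed
      then have hx: "Lm p l xh = Suc (l' (i0, xh i0))" using i0 by (simp add: l_def)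
      have hx2: "Lm p l' xh \<le> l' (i0, xh i0)" using Lm_le i0(1) by blast
      show ?thesis
      proof (cases "item_in p it x")
        case True
        then obtain i where "i < p" "it = (i, x i)" using item_in_iff by blast
        then have "Lm p l x \<le> 0" using Lm_le[of i p l x] by (simp add: l_def)
        then show ?thesis using hx by simp
      next
        case False
        then have "(x, xh) \<in> S'" using xS unfolding S'_def by auto
        with l' have lt: "Lm p l' x < Lm p l' xh" by auto
        obtain i1 where i1: "i1 < p" "Lm p l' x = l' (i1, x i1)" using Lm_ex[OF p] by blast
        have "(i1, x i1) \<noteq> it" proof
          assume "(i1, x i1) = it"
          then have "item_in p it x" using i1(1) by (auto simp: item_in_iff)
          then show False using False by blast
        qed
        then have "Lm p l x \<le> Suc (l' (i1, x i1))" using Lm_le[OF i1(1), of l x] by (simp add: l_def)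
        then show ?thesis using hx hx2 lt i1 by linarith
      qed
    qed
    then show ?thesis by blast
  qed
qed

lemma finite_Bundles: "finite (Bundles n p)"
  unfolding Bundles_def by (rule finite_PiE) auto

lemma eats_unique:
  assumes "strict_linear_order_on (Bundles n p) (R j)"
    and "eats n p R q j t x" "eats n p R q j t y"
  shows "x = y"
proof (rule ccontr)
  assume "x \<noteq> y"
  with assms have "(x, y) \<in> R j" "(y, x) \<in> R j" unfolding eats_def by metis+
  then have "(x, x) \<in> R j" using assms(1) unfolding strict_linear_order_on_def trans_def by blast
  then show False using assms(1) unfolding strict_linear_order_on_def irrefl_def by blast
qed

lemma eat_no_cycle:
  assumes prof: "is_profile n p R" and sp: "eating_speeds n \<omega>" and out: "eating_output n p R \<omega> P"
  shows "\<not> generalized_cycle n p R P C"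
proof
  assume cyc: "generalized_cycle n p R P C"
  let ?B = "Bundles n p"
  obtain q where run: "eating_run n p R \<omega> q" and Pq: "\<forall>j<n. \<forall>x\<in>?B. P j x = q 1 j x"
    using out unfolding eating_output_def by blast
  have integ: "((\<lambda>\<tau>. if eats n p R q j \<tau> x then \<omega> j \<tau> else 0) has_integral q t j x) {0..t}"
    if "t \<in> {0..1}" "j < n" "x \<in> ?B" for t j x
    using run that unfolding eating_run_def by blast
  have mono: "q t1 j x \<le> q t2 j x"
    if "t1 \<in> {0..1}" "t2 \<in> {0..1}" "t1 \<le> t2" "j < n" "x \<in> ?B" for t1 t2 j x
  proof (rule has_integral_subset_le[OF _ integ integ])
    show "{0..t1} \<subseteq> {0..t2}" using that by auto
    show "\<forall>\<tau>\<in>{0..t2}. 0 \<le> (if eats n p R q j \<tau> x then \<omega> j \<tau> else 0)"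
      using sp that unfolding eating_speeds_def by auto
  qed (use that in auto)
  have remmono: "rem_supply n p q t2 it \<le> rem_supply n p q t1 it"
    if "t1 \<in> {0..1}" "t2 \<in> {0..1}" "t1 \<le> t2" for t1 t2 it
  proof -
    have "(\<Sum>j<n. \<Sum>x\<in>{x\<in>?B. item_in p it x}. q t1 j x) \<le> (\<Sum>j<n. \<Sum>x\<in>{x\<in>?B. item_in p it x}. q t2 j x)"
      using mono that by (intro sum_mono) auto
    then show ?thesis unfolding rem_supply_def by simp
  qed
  have eatex: "\<exists>\<tau>\<in>{0..1}. eats n p R q j \<tau> xh" if "j < n" "xh \<in> ?B" "P j xh > 0" for j xh
  proof (rule ccontr)
    assume "\<not> ?thesis"
    then have "((\<lambda>\<tau>. if eats n p R q j \<tau> xh then \<omega> j \<tau> else 0) has_integral 0) {0..1}"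
      using has_integral_cong[of "{0..1::real}" "(\<lambda>\<tau>. if eats n p R q j \<tau> xh then \<omega> j \<tau> else 0)" "\<lambda>_. 0"]
      by auto
    moreover have "((\<lambda>\<tau>. if eats n p R q j \<tau> xh then \<omega> j \<tau> else 0) has_integral q 1 j xh) {0..1}"
      using integ that by auto
    ultimately have "q 1 j xh = 0" using has_integral_unique by blast
    then show False using Pq that by auto
  qed
  have CB: "C \<subseteq> ?B \<times> ?B" using cyc unfolding generalized_cycle_def improvable_def by auto
  then have finC: "finite C" using finite_Bundles by (meson finite_SigmaI finite_subset)
  have "\<forall>c\<in>C. \<exists>\<tau>. \<exists>j<n. \<tau> \<in> {0..1} \<and> (fst c, snd c) \<in> R j \<and> eats n p R q j \<tau> (snd c)"
  proof
    fix c assume c: "c \<in> C"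
    obtain x xh where cx: "c = (x, xh)" by (cases c)
    have "improvable n p R P x xh" using c cx cyc unfolding generalized_cycle_def by auto
    then obtain j where j: "j < n" "(x, xh) \<in> R j" "P j xh > 0" "xh \<in> ?B"
      unfolding improvable_def by auto
    then show "\<exists>\<tau>. \<exists>j<n. \<tau> \<in> {0..1} \<and> (fst c, snd c) \<in> R j \<and> eats n p R q j \<tau> (snd c)"
      using eatex[OF j(1) j(4) j(3)] cx j(1,2) by force
  qed
  then obtain T where T: "\<forall>c\<in>C. \<exists>j<n. T c \<in> {0..1} \<and> (fst c, snd c) \<in> R j \<and> eats n p R q j (T c) (snd c)"
    by metis
  have Cne: "C \<noteq> {}" using cyc unfolding generalized_cycle_def by auto
  have "Min (T ` C) \<in> T ` C" using finC Cne by (intro Min_in) auto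
  then obtain c1 where c1: "c1 \<in> C" "T c1 = Min (T ` C)" by auto
  have c1min: "T c1 \<le> T c" if "c \<in> C" for c using c1 that finC by auto
  obtain x1 xh1 where cx1: "c1 = (x1, xh1)" by (cases c1)
  from T c1 cx1 obtain j1 where j1: "j1 < n" "T c1 \<in> {0..1}" "(x1, xh1) \<in> R j1" "eats n p R q j1 (T c1) xh1"
    by auto
  have slo: "strict_linear_order_on ?B (R j1)" using prof j1(1) unfolding is_profile_def by auto
  have "\<not> available n p q (T c1) x1"
  proof
    assume av: "available n p q (T c1) x1"
    then have "x1 = xh1 \<or> (xh1, x1) \<in> R j1" using j1(4) unfolding eats_def by blast
    then have "(x1, x1) \<in> R j1" using j1(3) slo unfolding strict_linear_order_on_def trans_def by blast
    then show False using slo unfolding strict_linear_order_on_def irrefl_def by blast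
  qed
  moreover have "x1 \<in> ?B" using CB c1 cx1 by auto
  ultimately obtain it where it: "item_in p it x1" "\<not> rem_supply n p q (T c1) it > 0"
    unfolding available_def by blast
  then obtain c2 where c2: "c2 \<in> C" "item_in p it (snd c2)"
    using cyc c1 cx1 unfolding generalized_cycle_def by fastforce
  from T c2 obtain j2 where j2: "j2 < n" "T c2 \<in> {0..1}" "eats n p R q j2 (T c2) (snd c2)"
    by auto
  have "rem_supply n p q (T c2) it > 0" using j2(3) c2(2) unfolding eats_def available_def by blast
  moreover have "rem_supply n p q (T c2) it \<le> rem_supply n p q (T c1) it"
    using remmono j1(2) j2(2) c1min[OF c2(1)] by blast
  ultimately show False using it(2) by linarith
qed

lemma clamp01_le1: "clamp01 u \<le> 1" and clamp01_ge0: "clamp01 u \<ge> 0"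
  unfolding clamp01_def by auto

lemma clamp01_one: "u \<ge> 1 \<Longrightarrow> clamp01 u = 1"
  unfolding clamp01_def by auto

lemma clamp01_lt1: "u < 1 \<Longrightarrow> clamp01 u < 1"
  unfolding clamp01_def by auto

lemma item_in_Items: "item_in p it y \<Longrightarrow> y \<in> Bundles n p \<Longrightarrow> it \<in> Items n p"
  unfolding item_in_def Items_def Bundles_def by (cases it) (auto simp: PiE_iff)

lemma no_cycle_eat:
  assumes n: "n \<ge> 1" and p: "p \<ge> 1" and prof: "is_profile n p R" and asg: "is_assignment n p P"
    and nocyc: "\<not> (\<exists>C. generalized_cycle n p R P C)"
  shows "\<exists>\<omega>. eating_speeds n \<omega> \<and> eating_output n p R \<omega> P"
proof -
  let ?B = "Bundles n p"
  define S where "S = {(x, xh). improvable n p R P x xh}"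
  have SB: "S \<subseteq> ?B \<times> ?B" unfolding S_def improvable_def by auto
  then have finS: "finite S" using finite_Bundles by (meson finite_SigmaI finite_subset)
  have ncS: "\<not> (\<forall>it. (\<exists>(x1, xh1)\<in>C. item_in p it x1) \<longrightarrow> (\<exists>(x2, xh2)\<in>C. item_in p it xh2))"
    if "C \<subseteq> S" "C \<noteq> {}" for C
  proof
    assume "\<forall>it. (\<exists>(x1, xh1)\<in>C. item_in p it x1) \<longrightarrow> (\<exists>(x2, xh2)\<in>C. item_in p it xh2)"
    moreover have "\<forall>(x, xh)\<in>C. improvable n p R P x xh" using that unfolding S_def by auto
    ultimately have "generalized_cycle n p R P C" using that unfolding generalized_cycle_def by blast
    then show False using nocyc by blast
  qed
  obtain l where l: "\<forall>(x, xh)\<in>S. Lm p l x < Lm p l xh"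
    using levels[OF finS p ncS] by blast
  define L where "L = Lm p l"
  have imp: "L x < L xh" if "improvable n p R P x xh" for x xh
    using l that unfolding S_def L_def by auto
  define N where "N = Max (L ` ?B)"
  have LN: "L y \<le> N" if "y \<in> ?B" for y
    unfolding N_def using that finite_Bundles by auto
  define M :: real where "M = real N + 1"
  have M0: "M > 0" unfolding M_def by simp
  have LM: "M - real (L y) \<ge> 1" if "y \<in> ?B" for y using LN[OF that] unfolding M_def by simp
  define q where "q = (\<lambda>(t::real) j x. P j x * clamp01 (M*t - real (L x)))"
  define \<omega> where "\<omega> = (\<lambda>j \<tau>. \<Sum>x\<in>?B. P j x * ind M (real (L x)) \<tau>)"
  have Pnn: "0 \<le> P j x" if "j < n" "x \<in> ?B" for j x using asg that unfolding is_assignment_def by auto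
  have Prow: "(\<Sum>x\<in>?B. P j x) = 1" if "j < n" for j using asg that unfolding is_assignment_def by auto
  have Pcol: "(\<Sum>j<n. \<Sum>x\<in>{x\<in>?B. item_in p it x}. P j x) = 1" if "it \<in> Items n p" for it
    using asg that unfolding is_assignment_def by auto
  have slo: "strict_linear_order_on ?B (R j)" if "j < n" for j using prof that unfolding is_profile_def by auto
  have qle: "q t j x \<le> P j x" if "j < n" "x \<in> ?B" for t j x
    using Pnn[OF that] clamp01_le1[of "M*t - real (L x)"] unfolding q_def
    by (simp add: mult_left_le)
  have eatsy: "eats n p R q j \<tau> y"
    if j: "j < n" and y: "y \<in> ?B" and Py: "P j y > 0" and \<tau>: "\<tau> \<in> {0..1}"
      and w1: "real (L y) \<le> M*\<tau>" and w2: "M*\<tau> < real (L y) + 1" for j y \<tau>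
  proof -
    have "rem_supply n p q \<tau> it > 0" if it: "item_in p it y" for it
    proof -
      have "(\<Sum>j'<n. \<Sum>x\<in>{x\<in>?B. item_in p it x}. q \<tau> j' x) < (\<Sum>j'<n. \<Sum>x\<in>{x\<in>?B. item_in p it x}. P j' x)"
      proof (rule sum_strict_mono_ex1)
        show "\<forall>j'\<in>{..<n}. (\<Sum>x\<in>{x\<in>?B. item_in p it x}. q \<tau> j' x) \<le> (\<Sum>x\<in>{x\<in>?B. item_in p it x}. P j' x)"
          using qle by (auto intro: sum_mono)
        have "(\<Sum>x\<in>{x\<in>?B. item_in p it x}. q \<tau> j x) < (\<Sum>x\<in>{x\<in>?B. item_in p it x}. P j x)"
        proof (rule sum_strict_mono_ex1)
          show "\<forall>x\<in>{x\<in>?B. item_in p it x}. q \<tau> j x \<le> P j x" using qle j by auto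
          have "clamp01 (M*\<tau> - real (L y)) < 1" using w2 by (intro clamp01_lt1) simp
          then have "q \<tau> j y < P j y" using Py unfolding q_def by simp
          then show "\<exists>x\<in>{x\<in>?B. item_in p it x}. q \<tau> j x < P j x" using y it by auto
        qed (use finite_Bundles in auto)
        then show "\<exists>j'\<in>{..<n}. (\<Sum>x\<in>{x\<in>?B. item_in p it x}. q \<tau> j' x) < (\<Sum>x\<in>{x\<in>?B. item_in p it x}. P j' x)"
          using j by auto
      qed auto
      then show ?thesis using Pcol[OF item_in_Items[OF it y]] unfolding rem_supply_def by simp
    qed
    then have avy: "available n p q \<tau> y" using y unfolding available_def by blast
    have "z = y \<or> (y, z) \<in> R j" if av: "available n p q \<tau> z" for z
    proof (rule ccontr)
      assume nz: "\<not> (z = y \<or> (y, z) \<in> R j)"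
      have z: "z \<in> ?B" using av unfolding available_def by auto
      have "(z, y) \<in> R j" using slo[OF j] nz z y unfolding strict_linear_order_on_def total_on_def by blast
      then have "improvable n p R P z y" unfolding improvable_def using z y j Py by blast
      then have Lzy: "L z < L y" by (rule imp)
      obtain i where i: "i < p" "L z = l (i, z i)" using Lm_ex[OF p] unfolding L_def by blast
      define it where "it = (i, z i)"
      have itz: "item_in p it z" unfolding it_def item_in_def using i by auto
      have "q \<tau> j' x = P j' x" if "x \<in> ?B" "item_in p it x" for j' x
      proof -
        have "x i = z i" using that(2) unfolding it_def item_in_def by auto
        then have "L x \<le> L z" using Lm_le[OF i(1), of l x] i(2) unfolding L_def by simp
        then have "real (L x) + 1 \<le> M * \<tau>" using Lzy w1 by linarith
        then show ?thesis unfolding q_def by (simp add: clamp01_one)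
      qed
      then have "rem_supply n p q \<tau> it = 0"
        using Pcol[OF item_in_Items[OF itz z]] unfolding rem_supply_def by simp
      moreover have "rem_supply n p q \<tau> it > 0" using av itz unfolding available_def by blast
      ultimately show False by simp
    qed
    then show ?thesis using avy unfolding eats_def by blast
  qed
  have indval: "ind M k \<tau> = (if k \<le> M*\<tau> \<and> M*\<tau> < k+1 then M else 0)" for k \<tau>
    by (simp add: ind_def)
  have uniq: "y = y'"
    if j: "j < n" and "y \<in> ?B" "y' \<in> ?B" "P j y > 0" "P j y' > 0"
      "real (L y) \<le> M*\<tau>" "M*\<tau> < real (L y) + 1" "real (L y') \<le> M*\<tau>" "M*\<tau> < real (L y') + 1" for j y y' \<tau>
  proof (rule ccontr)
    assume ne: "y \<noteq> y'"
    have "L y = L y'" using that by linarith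
    moreover have "(y, y') \<in> R j \<or> (y', y) \<in> R j"
      using slo[OF j] ne that unfolding strict_linear_order_on_def total_on_def by blast
    then have "L y < L y' \<or> L y' < L y"
      using imp that unfolding improvable_def by blast
    ultimately show False by simp
  qed
  have key: "(if eats n p R q j \<tau> x then \<omega> j \<tau> else 0) = P j x * ind M (real (L x)) \<tau>"
    if j: "j < n" and \<tau>: "\<tau> \<in> {0..1}" and x: "x \<in> ?B" for j \<tau> x
  proof (cases "\<exists>y\<in>?B. P j y > 0 \<and> real (L y) \<le> M*\<tau> \<and> M*\<tau> < real (L y) + 1")
    case True
    then obtain y where y: "y \<in> ?B" "P j y > 0" "real (L y) \<le> M*\<tau>" "M*\<tau> < real (L y) + 1" by blast
    have zero: "P j x' * ind M (real (L x')) \<tau> = 0" if "x' \<in> ?B" "x' \<noteq> y" for x'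
    proof (cases "real (L x') \<le> M*\<tau> \<and> M*\<tau> < real (L x') + 1")
      case True
      have "\<not> P j x' > 0" using uniq[OF j y(1) that(1) y(2) _ y(3,4)] True that(2) by auto
      then have "P j x' = 0" using Pnn[OF j that(1)] by simp
      then show ?thesis by simp
    qed (auto simp: ind_def)
    have "\<omega> j \<tau> = P j y * ind M (real (L y)) \<tau> + (\<Sum>x'\<in>?B - {y}. P j x' * ind M (real (L x')) \<tau>)"
      unfolding \<omega>_def by (rule sum.remove[OF finite_Bundles y(1)])
    also have "(\<Sum>x'\<in>?B - {y}. P j x' * ind M (real (L x')) \<tau>) = 0"
      using zero by (intro sum.neutral) auto
    finally have om: "\<omega> j \<tau> = P j y * ind M (real (L y)) \<tau>" by simp
    have ey: "eats n p R q j \<tau> y" using eatsy[OF j y(1) y(2) \<tau> y(3) y(4)] .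
    show ?thesis
    proof (cases "x = y")
      case True then show ?thesis using ey om by simp
    next
      case False
      then have "\<not> eats n p R q j \<tau> x" using eats_unique[OF slo[OF j] ey] by metis
      then show ?thesis using zero[OF x False] by simp
    qed
  next
    case False
    have zero: "P j x' * ind M (real (L x')) \<tau> = 0" if "x' \<in> ?B" for x'
    proof (cases "real (L x') \<le> M*\<tau> \<and> M*\<tau> < real (L x') + 1")
      case True
      then have "P j x' = 0" using False Pnn[OF j that] that by force
      then show ?thesis by simp
    qed (auto simp: ind_def)
    have "\<omega> j \<tau> = 0" unfolding \<omega>_def using zero by (intro sum.neutral) auto
    then show ?thesis using zero[OF x] by simp
  qed
  have run: "eating_run n p R \<omega> q"
    unfolding eating_run_def
  proof (intro ballI allI impI)
    fix t j x assume t: "t \<in> {0..1::real}" and j: "j < n" and x: "x \<in> ?B"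
    have "((\<lambda>\<tau>. P j x * ind M (real (L x)) \<tau>) has_integral (P j x * clamp01 (M*t - real (L x)))) {0..t}"
      using t M0 by (intro has_integral_mult_right ind_integral) auto
    moreover have "\<tau> \<in> {0..t} \<Longrightarrow> (if eats n p R q j \<tau> x then \<omega> j \<tau> else 0) = P j x * ind M (real (L x)) \<tau>" for \<tau>
      using key[OF j _ x] t by auto
    ultimately show "((\<lambda>\<tau>. if eats n p R q j \<tau> x then \<omega> j \<tau> else 0) has_integral q t j x) {0..t}"
      unfolding q_def using has_integral_cong by (smt (verit) case_prod_conv)
  qed
  have q1: "q 1 j x = P j x" if "x \<in> ?B" for j x
    unfolding q_def using clamp01_one[OF LM[OF that]] by simp
  have speeds: "eating_speeds n \<omega>"
    unfolding eating_speeds_def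
  proof (intro allI impI conjI)
    fix j assume j: "j < n"
    show "\<forall>t\<in>{0..1}. 0 \<le> \<omega> j t"
      unfolding \<omega>_def using Pnn[OF j] M0 by (auto intro!: sum_nonneg simp: ind_def)
    have "(\<omega> j has_integral (\<Sum>x\<in>?B. P j x * clamp01 (M*1 - real (L x)))) {0..1}"
      unfolding \<omega>_def using M0 finite_Bundles
      by (intro has_integral_sum has_integral_mult_right ind_integral) auto
    moreover have "(\<Sum>x\<in>?B. P j x * clamp01 (M*1 - real (L x))) = 1"
      using Prow[OF j] clamp01_one[OF LM] by simp
    ultimately have I: "(\<omega> j has_integral 1) {0..1}" by simp
    then show "\<omega> j integrable_on {0..1}" by blast
    show "integral {0..1} (\<omega> j) = 1" using I by (rule integral_unique)
  qed
  have "eating_output n p R \<omega> P"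
    unfolding eating_output_def using run q1 by auto
  then show ?thesis using speeds by blast
qed

theorem theorem5:
  fixes n p :: nat and R :: "nat \<Rightarrow> bundl rel" and P :: "nat \<Rightarrow> bundl \<Rightarrow> real"
  assumes "n \<ge> 1" and "p \<ge> 1"
    and "is_profile n p R"
    and "is_assignment n p P"
  shows "(\<not> (\<exists>C. generalized_cycle n p R P C)) \<longleftrightarrow>
         (\<exists>\<omega>. eating_speeds n \<omega> \<and> eating_output n p R \<omega> P)"
  using no_cycle_eat[OF assms] eat_no_cycle[OF assms(3)] by blast

end
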